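(* Let $r$ be a positive integer, let $G$ be a finite simple graph, and let $S$ be an $r$-net of $G$. Let $H$ be the induced subgraph of $G$ obtained by deleting the vertices of $S$, and suppose $H$ has at least one vertex. Then $\lambda_1(H)^{2r} \le \lambda_1(G)^{2r} - 1$.
   Context: An $r$-net in a graph $G$ is a subset $S$ of the vertex set of $G$ such that every vertex of $G$ lies within (graph) distance at most $r$ of some vertex of $S$. For a graph $F$, $\lambda_1(F)$ denotes the largest eigenvalue of the adjacency matrix of $F$. *)

theory Defs
  imports Main "Jordan_Normal_Form.Char_Poly"
begin

definition simple_graph :: "'a set \<Rightarrow> ('a \<Rightarrow> 'a \<Rightarrow> bool) \<Rightarrow> bool" where
  "simple_graph V E \<longleftrightarrow> finite V \<and> (\<forall>u v. E u v \<longrightarrow> E v u) \<and> (\<forall>v. \<not> E v v)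
     \<and> (\<forall>u v. E u v \<longrightarrow> u \<in> V \<and> v \<in> V)"

definition dist_le :: "'a set \<Rightarrow> ('a \<Rightarrow> 'a \<Rightarrow> bool) \<Rightarrow> 'a \<Rightarrow> 'a \<Rightarrow> nat \<Rightarrow> bool" where
  "dist_le V E u v k \<longleftrightarrow> (\<exists>p. p \<noteq> [] \<and> hd p = u \<and> last p = v \<and> length p \<le> k + 1
      \<and> set p \<subseteq> V \<and> (\<forall>i. Suc i < length p \<longrightarrow> E (p ! i) (p ! Suc i)))"

definition r_net :: "'a set \<Rightarrow> ('a \<Rightarrow> 'a \<Rightarrow> bool) \<Rightarrow> nat \<Rightarrow> 'a set \<Rightarrow> bool" where
  "r_net V E r S \<longleftrightarrow> S \<subseteq> V \<and> (\<forall>v\<in>V. \<exists>s\<in>S. dist_le V E v s r)"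

definition adj_matrix :: "'a::linorder set \<Rightarrow> ('a \<Rightarrow> 'a \<Rightarrow> bool) \<Rightarrow> real mat" where
  "adj_matrix W E = (let vs = sorted_list_of_set W in
     mat (length vs) (length vs) (\<lambda>(i,j). if E (vs ! i) (vs ! j) then 1 else 0))"

text \<open>Largest eigenvalue of the adjacency matrix (real symmetric, so all
  eigenvalues are real).\<close>
definition lambda1 :: "'a::linorder set \<Rightarrow> ('a \<Rightarrow> 'a \<Rightarrow> bool) \<Rightarrow> real" where
  "lambda1 W E = Max {k. eigenvalue (adj_matrix W E) k}"

end

theory Submission
  imports Defs "HOL-Analysis.Function_Topology" "HOL-Analysis.Abstract_Limits"
begin


definition qf :: "('a \<Rightarrow> 'a \<Rightarrow> real) \<Rightarrow> 'a set \<Rightarrow> ('a \<Rightarrow> real) \<Rightarrow> real" where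
  "qf K W f = (\<Sum>u\<in>W. \<Sum>v\<in>W. f u * K u v * f v)"
definition bf :: "('a \<Rightarrow> 'a \<Rightarrow> real) \<Rightarrow> 'a set \<Rightarrow> ('a \<Rightarrow> real) \<Rightarrow> ('a \<Rightarrow> real) \<Rightarrow> real" where
  "bf K W f g = (\<Sum>u\<in>W. \<Sum>v\<in>W. f u * K u v * g v)"
definition nrm :: "'a set \<Rightarrow> ('a \<Rightarrow> real) \<Rightarrow> real" where
  "nrm W f = (\<Sum>u\<in>W. (f u)^2)"

lemma nrm_nonneg: "nrm W f \<ge> 0"
  unfolding nrm_def by (simp add: sum_nonneg)

lemma nrm_zero: assumes "finite W" "nrm W f = 0" "u \<in> W" shows "f u = 0"
  using assms unfolding nrm_def by (simp add: sum_nonneg_eq_0_iff)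

lemma qf_zero: assumes "finite W" "nrm W f = 0" shows "qf K W f = 0"
  using nrm_zero[OF assms] unfolding qf_def by simp

lemma qf_scale: "qf K W (\<lambda>u. a * f u) = a^2 * qf K W f"
  unfolding qf_def by (simp add: sum_distrib_left power2_eq_square algebra_simps)

lemma nrm_scale: "nrm W (\<lambda>u. a * f u) = a^2 * nrm W f"
  unfolding nrm_def by (simp add: sum_distrib_left power2_eq_square algebra_simps)

lemma rayleigh_exists:
  fixes K :: "'a \<Rightarrow> 'a \<Rightarrow> real"
  assumes fin: "finite W" and ne: "W \<noteq> {}"
  shows "\<exists>f. nrm W f = 1 \<and> (\<forall>g. nrm W g = 1 \<longrightarrow> qf K W g \<le> qf K W f)"
proof -
  let ?X = "product_topology (\<lambda>_. euclideanreal) W"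
  define C where "C = {f \<in> topspace ?X. nrm W f \<in> {1}} \<inter> PiE W (\<lambda>_. {-1..1::real})"
  have cn: "continuous_map ?X euclideanreal (nrm W)"
    unfolding nrm_def using fin by (intro continuous_intros) auto
  have cq: "continuous_map ?X euclideanreal (qf K W)"
    unfolding qf_def using fin by (intro continuous_intros) auto
  have cl: "closedin ?X {f \<in> topspace ?X. nrm W f \<in> {1}}"
    by (rule closedin_continuous_map_preimage[OF cn]) simp
  have cp: "compactin ?X (PiE W (\<lambda>_. {-1..1::real}))"
    by (simp add: compactin_PiE)
  have cC: "compactin ?X C" unfolding C_def by (rule closed_Int_compactin[OF cl cp])
  have "compactin euclideanreal (qf K W ` C)" by (rule image_compactin[OF cC cq])
  hence cim: "compact (qf K W ` C)" by simp
  obtain v0 where v0: "v0 \<in> W" using ne by auto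
  define e0 where "e0 = restrict (\<lambda>u. if u = v0 then 1 else (0::real)) W"
  have "nrm W e0 = (\<Sum>u\<in>W. if u = v0 then 1 else 0)" unfolding nrm_def
    by (rule sum.cong) (auto simp: e0_def)
  hence "nrm W e0 = 1" using v0 fin by simp
  hence "e0 \<in> C" unfolding C_def e0_def by auto
  hence "qf K W ` C \<noteq> {}" by auto
  from compact_attains_sup[OF cim this] obtain f where fC: "f \<in> C"
    and fmax: "\<forall>y\<in>qf K W ` C. y \<le> qf K W f" by auto
  have "nrm W f = 1" using fC unfolding C_def by auto
  moreover have "qf K W g \<le> qf K W f" if g: "nrm W g = 1" for g
  proof -
    define g' where "g' = restrict g W"
    have q: "qf K W g' = qf K W g" unfolding qf_def g'_def by simp
    have n: "nrm W g' = nrm W g" unfolding nrm_def g'_def by simp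
    have "\<bar>g u\<bar> \<le> 1" if "u \<in> W" for u
    proof -
      have "(g u)^2 \<le> nrm W g" unfolding nrm_def
        by (rule member_le_sum[OF that _ fin]) simp
      hence "(g u)^2 \<le> 1^2" using g by simp
      thus ?thesis using abs_le_square_iff[of "g u" 1] by simp
    qed
    hence b: "-1 \<le> g u \<and> g u \<le> 1" if "u \<in> W" for u using that by (simp add: abs_le_iff)
    have "g' \<in> PiE W (\<lambda>_. {-1..1::real})" using b by (auto simp: g'_def)
    moreover have "g' \<in> topspace ?X" by (auto simp: g'_def)
    ultimately have "g' \<in> C" unfolding C_def using n g by auto
    thus ?thesis using fmax q by force
  qed
  ultimately show ?thesis by blast
qed

lemma rayleigh_bound:
  assumes fin: "finite W" and f1: "nrm W f = 1"
    and mx: "\<forall>g. nrm W g = 1 \<longrightarrow> qf K W g \<le> qf K W f"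
  shows "qf K W g \<le> qf K W f * nrm W g"
proof (cases "nrm W g = 0")
  case True thus ?thesis using qf_zero[OF fin True] by simp
next
  case False
  hence pos: "nrm W g > 0" using nrm_nonneg[of W g] by simp
  define c where "c = sqrt (nrm W g)"
  have c: "c > 0" "c^2 = nrm W g" using pos unfolding c_def by auto
  define h where "h = (\<lambda>u. (1/c) * g u)"
  have "nrm W h = 1" unfolding h_def nrm_scale using c pos by (simp add: power_divide)
  hence "qf K W h \<le> qf K W f" using mx by blast
  hence "(1/c)^2 * qf K W g \<le> qf K W f" unfolding h_def qf_scale .
  hence "qf K W g \<le> qf K W f * c^2" using c pos by (simp add: field_simps power_divide)
  thus ?thesis using c pos by simp
qed


definition aop :: "('a \<Rightarrow> 'a \<Rightarrow> real) \<Rightarrow> 'a set \<Rightarrow> ('a \<Rightarrow> real) \<Rightarrow> 'a \<Rightarrow> real" where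
  "aop K W f u = (\<Sum>v\<in>W. K u v * f v)"
definition symk :: "('a \<Rightarrow> 'a \<Rightarrow> real) \<Rightarrow> bool" where
  "symk K \<longleftrightarrow> (\<forall>u v. K u v = K v u)"

lemma qf_add: "qf K W (\<lambda>v. f v + t * g v) = qf K W f + t * bf K W f g + t * bf K W g f + t^2 * qf K W g"
proof -
  have "\<And>u v. (f u + t * g u) * K u v * (f v + t * g v) = f u * K u v * f v + t * (f u * K u v * g v) + t * (g u * K u v * f v) + t^2 * (g u * K u v * g v)"
    by (simp add: power2_eq_square algebra_simps)
  thus ?thesis by (simp add: qf_def bf_def sum.distrib sum_distrib_left)
qed

lemma nrm_add: "nrm W (\<lambda>v. f v + t * g v) = nrm W f + 2 * t * (\<Sum>u\<in>W. f u * g u) + t^2 * nrm W g"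
proof -
  have "\<And>u. (f u + t*g u)^2 = (f u)^2 + 2 * t * (f u * g u) + t^2 * (g u)^2"
    by (simp add: power2_eq_square algebra_simps)
  thus ?thesis by (simp add: nrm_def sum.distrib sum_distrib_left)
qed

lemma bf_sym: assumes "symk K" shows "bf K W g f = bf K W f g"
  unfolding bf_def using assms unfolding symk_def
  by (subst sum.swap) (simp add: mult.commute mult.left_commute)

lemma bf_delta: assumes "finite W" "u \<in> W"
  shows "bf K W (\<lambda>v. if v = u then 1 else 0) f = aop K W f u"
proof -
  have "bf K W (\<lambda>v. if v = u then 1 else 0) f = (\<Sum>x\<in>W. if x = u then (\<Sum>y\<in>W. K u y * f y) else 0)"
    unfolding bf_def by (rule sum.cong) auto
  thus ?thesis using assms by (simp add: aop_def)
qed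

lemma qf_delta: assumes "finite W" "u \<in> W"
  shows "qf K W (\<lambda>v. if v = u then 1 else 0) = K u u"
proof -
  have "qf K W (\<lambda>v. if v = u then 1 else 0) = (\<Sum>x\<in>W. if x = u then (\<Sum>y\<in>W. if y = u then K u u else 0) else 0)"
    unfolding qf_def by (rule sum.cong) (auto intro!: sum.cong)
  thus ?thesis using assms by simp
qed

lemma eigen_of_max:
  assumes fin: "finite W" and sym: "symk K" and u: "u \<in> W"
    and eq: "qf K W f = \<mu> * nrm W f" and bd: "\<forall>g. qf K W g \<le> \<mu> * nrm W g"
  shows "aop K W f u = \<mu> * f u"
proof (rule ccontr)
  assume neq: "aop K W f u \<noteq> \<mu> * f u"
  define e where "e = (\<lambda>v. if v = u then 1 else (0::real))"
  define b where "b = aop K W f u - \<mu> * f u"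
  define c where "c = K u u - \<mu>"
  have key: "2*t*b + t^2 * c \<le> 0" for t
  proof -
    have le: "qf K W (\<lambda>v. f v + t * e v) \<le> \<mu> * nrm W (\<lambda>v. f v + t * e v)" using bd by blast
    have q: "qf K W (\<lambda>v. f v + t * e v) = qf K W f + 2 * t * aop K W f u + t^2 * K u u"
    proof -
      have "bf K W e f = aop K W f u" unfolding e_def by (rule bf_delta[OF fin u])
      moreover hence "bf K W f e = aop K W f u" using bf_sym[OF sym, of W f e] by simp
      moreover have "qf K W e = K u u" unfolding e_def by (rule qf_delta[OF fin u])
      ultimately show ?thesis unfolding qf_add by simp
    qed
    have "(\<Sum>x\<in>W. f x * e x) = (\<Sum>x\<in>W. if x = u then f u else 0)"
      unfolding e_def by (rule sum.cong) auto
    hence "(\<Sum>x\<in>W. f x * e x) = f u" using fin u by simp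
    moreover have "nrm W e = (\<Sum>x\<in>W. if x = u then 1 else 0)"
      unfolding nrm_def e_def by (rule sum.cong) auto
    moreover hence "nrm W e = 1" using fin u by simp
    ultimately have n: "nrm W (\<lambda>v. f v + t * e v) = nrm W f + 2 * t * f u + t^2"
      unfolding nrm_add by simp
    show ?thesis using le unfolding q n b_def c_def eq by (simp add: algebra_simps)
  qed
  define D where "D = \<bar>c\<bar> + 1"
  have D: "D > 0" unfolding D_def by simp
  have "2*(b/D)*b + (b/D)^2 * c \<le> 0" by (rule key)
  hence "D^2 * (2*(b/D)*b + (b/D)^2 * c) \<le> 0" by (simp add: mult_nonneg_nonpos)
  moreover have "D^2 * (2*(b/D)*b + (b/D)^2 * c) = b^2 * (2*D + c)"
    using D by (simp add: field_simps power2_eq_square)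
  moreover have "b^2 > 0" using neq unfolding b_def by simp
  moreover have "2*D + c > 0" unfolding D_def by (cases "c \<ge> 0") auto
  ultimately show False by (metis mult_pos_pos not_le)
qed

lemma qf_abs:
  assumes "\<forall>u v. K u v \<ge> 0"
  shows "qf K W f \<le> qf K W (\<lambda>v. \<bar>f v\<bar>)" "- qf K W (\<lambda>v. \<bar>f v\<bar>) \<le> qf K W f"
proof -
  have a: "\<bar>f u * K u v * f v\<bar> = \<bar>f u\<bar> * K u v * \<bar>f v\<bar>" for u v
    using assms by (simp add: abs_mult)
  show "qf K W f \<le> qf K W (\<lambda>v. \<bar>f v\<bar>)" unfolding qf_def
    by (intro sum_mono) (metis a abs_ge_self)
  have "- qf K W (\<lambda>v. \<bar>f v\<bar>) = (\<Sum>u\<in>W. \<Sum>v\<in>W. - (\<bar>f u\<bar> * K u v * \<bar>f v\<bar>))"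
    unfolding qf_def by (simp add: sum_negf)
  also have "\<dots> \<le> qf K W f" unfolding qf_def
  proof (intro sum_mono)
    fix u v show "- (\<bar>f u\<bar> * K u v * \<bar>f v\<bar>) \<le> f u * K u v * f v"
      using a[of u v] abs_ge_minus_self[of "f u * K u v * f v"] by linarith
  qed
  finally show "- qf K W (\<lambda>v. \<bar>f v\<bar>) \<le> qf K W f" .
qed

lemma nrm_abs: "nrm W (\<lambda>v. \<bar>f v\<bar>) = nrm W f"
  unfolding nrm_def by simp

lemma aop_norm_bound:
  assumes fin: "finite W" and sym: "symk K"
    and up: "\<forall>g. qf K W g \<le> \<mu> * nrm W g" and lo: "\<forall>g. - (\<mu> * nrm W g) \<le> qf K W g"
  shows "nrm W (aop K W x) \<le> \<mu>^2 * nrm W x"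
proof -
  define y where "y = aop K W x"
  have bxy: "bf K W (\<lambda>v. s * x v) y = s * nrm W y" for s
  proof -
    have "bf K W (\<lambda>v. s * x v) y = s * (\<Sum>v\<in>W. (\<Sum>u\<in>W. K v u * x u) * y v)"
      unfolding bf_def using sym unfolding symk_def
      by (subst sum.swap) (simp add: sum_distrib_left sum_distrib_right mult.commute mult.left_commute)
    thus ?thesis unfolding y_def aop_def nrm_def by (simp add: power2_eq_square)
  qed
  have step: "4 * s * nrm W y \<le> 2 * \<mu> * (s^2 * nrm W x + nrm W y)" for s
  proof -
    define a where "a = (\<lambda>v. s * x v)"
    have p: "qf K W (\<lambda>v. a v + 1 * y v) - qf K W (\<lambda>v. a v + (-1) * y v) = 4 * bf K W a y"
      unfolding qf_add bf_sym[OF sym, of W y a] by simp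
    have ns: "nrm W (\<lambda>v. a v + 1 * y v) + nrm W (\<lambda>v. a v + (-1) * y v) = 2 * nrm W a + 2 * nrm W y"
      unfolding nrm_add by simp
    have "qf K W (\<lambda>v. a v + 1 * y v) \<le> \<mu> * nrm W (\<lambda>v. a v + 1 * y v)" using up by blast
    moreover have "- (\<mu> * nrm W (\<lambda>v. a v + (-1) * y v)) \<le> qf K W (\<lambda>v. a v + (-1) * y v)" using lo by blast
    moreover have "\<mu> * nrm W (\<lambda>v. a v + 1 * y v) + \<mu> * nrm W (\<lambda>v. a v + (-1) * y v) = \<mu> * (2 * nrm W a + 2 * nrm W y)"
      using ns by (metis distrib_left)
    ultimately have "4 * bf K W a y \<le> \<mu> * (2 * nrm W a + 2 * nrm W y)"
      using p by linarith
    thus ?thesis unfolding a_def bxy nrm_scale by (simp add: algebra_simps)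
  qed
  have nx: "nrm W x \<ge> 0" "nrm W y \<ge> 0" by (rule nrm_nonneg)+
  show ?thesis
  proof (cases "\<mu> > 0")
    case True
    have "4 * \<mu> * nrm W y \<le> 2 * \<mu> * (\<mu>^2 * nrm W x + nrm W y)" by (rule step)
    hence "2 * nrm W y \<le> \<mu>^2 * nrm W x + nrm W y" using True
      by (simp add: algebra_simps)
    thus ?thesis unfolding y_def by simp
  next
    case False
    have "4 * 1 * nrm W y \<le> 2 * \<mu> * (1^2 * nrm W x + nrm W y)" by (rule step)
    moreover have "2 * \<mu> * (1^2 * nrm W x + nrm W y) \<le> 0" using False nx
      by (simp add: mult_nonpos_nonneg)
    ultimately have "nrm W y \<le> 0" by simp
    moreover have "\<mu>^2 * nrm W x \<ge> 0" using nx by simp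
    ultimately show ?thesis unfolding y_def by linarith
  qed
qed


fun mpw :: "('a \<Rightarrow> 'a \<Rightarrow> real) \<Rightarrow> 'a set \<Rightarrow> nat \<Rightarrow> 'a \<Rightarrow> 'a \<Rightarrow> real" where
  "mpw K V 0 u v = (if u = v then 1 else 0)"
| "mpw K V (Suc k) u v = (\<Sum>w\<in>V. K u w * mpw K V k w v)"

lemma mpw_nonneg: "\<forall>u v. K u v \<ge> 0 \<Longrightarrow> mpw K V k u v \<ge> 0"
  by (induction k arbitrary: u v) (auto intro!: sum_nonneg)

lemma mpw_add: assumes fin: "finite V" and u: "u \<in> V"
  shows "mpw K V (a + b) u v = (\<Sum>w\<in>V. mpw K V a u w * mpw K V b w v)"
  using u
proof (induction a arbitrary: u)
  case 0
  have "(\<Sum>w\<in>V. mpw K V 0 u w * mpw K V b w v) = (\<Sum>w\<in>V. if u = w then mpw K V b w v else 0)"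
    by (rule sum.cong) auto
  thus ?case using 0 fin by simp
next
  case (Suc a)
  have "mpw K V (Suc a + b) u v = (\<Sum>x\<in>V. K u x * (\<Sum>w\<in>V. mpw K V a x w * mpw K V b w v))"
    using Suc.IH by simp
  also have "\<dots> = (\<Sum>x\<in>V. \<Sum>w\<in>V. K u x * mpw K V a x w * mpw K V b w v)"
    by (simp add: sum_distrib_left mult.assoc)
  also have "\<dots> = (\<Sum>w\<in>V. \<Sum>x\<in>V. K u x * mpw K V a x w * mpw K V b w v)"
    by (rule sum.swap)
  also have "\<dots> = (\<Sum>w\<in>V. mpw K V (Suc a) u w * mpw K V b w v)"
    by (simp add: sum_distrib_right)
  finally show ?case .
qed

lemma mpw_ge_term: assumes "finite V" "u \<in> V" "w \<in> V" "\<forall>u v. K u v \<ge> 0"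
  shows "mpw K V a u w * mpw K V b w v \<le> mpw K V (a + b) u v"
  unfolding mpw_add[OF assms(1,2)]
  by (rule member_le_sum[OF assms(3)]) (auto intro!: mult_nonneg_nonneg mpw_nonneg assms(4) assms(1))

lemma mpw_one: assumes "finite V" "v \<in> V" shows "mpw K V 1 w v = K w v"
proof -
  have "mpw K V 1 w v = (\<Sum>x\<in>V. if x = v then K w v else 0)"
    by simp (rule sum.cong, auto)
  thus ?thesis using assms by simp
qed

lemma mpw_sym: assumes fin: "finite V" and sym: "symk K"
  shows "u \<in> V \<Longrightarrow> v \<in> V \<Longrightarrow> mpw K V k u v = mpw K V k v u"
proof (induction k arbitrary: u v)
  case 0 thus ?case by simp
next
  case (Suc k)
  have "mpw K V (Suc k) u v = (\<Sum>w\<in>V. K u w * mpw K V k w v)" by simp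
  also have "\<dots> = (\<Sum>w\<in>V. mpw K V k v w * mpw K V 1 w u)"
  proof (rule sum.cong[OF refl])
    fix w assume w: "w \<in> V"
    have "mpw K V 1 w u = K w u" by (rule mpw_one[OF fin Suc.prems(1)])
    moreover have "K u w = K w u" using sym unfolding symk_def by blast
    moreover have "mpw K V k w v = mpw K V k v w" by (rule Suc.IH[OF w Suc.prems(2)])
    ultimately show "K u w * mpw K V k w v = mpw K V k v w * mpw K V 1 w u" by (metis mult.commute)
  qed
  also have "\<dots> = mpw K V (k + 1) v u" by (rule mpw_add[OF fin Suc.prems(2), symmetric])
  finally show ?case by simp
qed

lemma mpw_mono: assumes fin: "finite V" and sub: "W \<subseteq> V" and nn: "\<forall>u v. K u v \<ge> 0"
  shows "mpw K W k u v \<le> mpw K V k u v"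
proof (induction k arbitrary: u v)
  case 0 thus ?case by simp
next
  case (Suc k)
  have "mpw K W (Suc k) u v \<le> (\<Sum>w\<in>W. K u w * mpw K V k w v)"
    by simp (intro sum_mono mult_left_mono Suc.IH, use nn in auto)
  also have "\<dots> \<le> (\<Sum>w\<in>V. K u w * mpw K V k w v)"
    using nn by (intro sum_mono2[OF fin sub]) (auto intro!: mult_nonneg_nonneg mpw_nonneg)
  finally show ?case by simp
qed

definition Kadj :: "('a \<Rightarrow> 'a \<Rightarrow> bool) \<Rightarrow> 'a \<Rightarrow> 'a \<Rightarrow> real" where
  "Kadj E u v = (if E u v then 1 else 0)"

lemma Kadj_nonneg: "\<forall>u v. Kadj E u v \<ge> 0" unfolding Kadj_def by auto

lemma path_mpw: assumes fin: "finite V"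
  shows "p \<noteq> [] \<Longrightarrow> set p \<subseteq> V \<Longrightarrow> (\<forall>i. Suc i < length p \<longrightarrow> E (p!i) (p!Suc i))
    \<Longrightarrow> mpw (Kadj E) V (length p - 1) (hd p) (last p) \<ge> 1"
proof (induction p)
  case Nil thus ?case by simp
next
  case (Cons a p)
  show ?case
  proof (cases p)
    case Nil thus ?thesis by simp
  next
    case (Cons b rest)
    have ch: "\<forall>i. Suc i < length p \<longrightarrow> E (p!i) (p!Suc i)"
      using Cons.prems(3) by (metis Suc_less_eq length_Cons nth_Cons_Suc)
    have IH: "mpw (Kadj E) V (length p - 1) b (last p) \<ge> 1"
      using Cons.IH[OF _ _ ch] Cons.prems Cons by simp
    have E: "E a b" using Cons.prems(3)[rule_format, of 0] Cons by simp
    have bV: "b \<in> V" using Cons.prems(2) Cons by simp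
    have k1: "Kadj E a b = 1" using E by (simp add: Kadj_def)
    have "Kadj E a b * mpw (Kadj E) V (length p - 1) b (last p)
        \<le> (\<Sum>w\<in>V. Kadj E a w * mpw (Kadj E) V (length p - 1) w (last p))"
      by (rule member_le_sum[OF bV _ fin]) (auto intro!: mult_nonneg_nonneg mpw_nonneg Kadj_nonneg, simp add: Kadj_def)
    also have "\<dots> = mpw (Kadj E) V (length (a # p) - 1) (hd (a # p)) (last (a # p))"
      using Cons by simp
    finally have "Kadj E a b * mpw (Kadj E) V (length p - 1) b (last p) \<le> mpw (Kadj E) V (length (a # p) - 1) (hd (a # p)) (last (a # p))" .
    thus ?thesis using IH unfolding k1 mult_1 by linarith
  qed
qed

definition itr :: "('a \<Rightarrow> 'a \<Rightarrow> real) \<Rightarrow> 'a set \<Rightarrow> nat \<Rightarrow> ('a \<Rightarrow> real) \<Rightarrow> 'a \<Rightarrow> real" where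
  "itr K W k x = (aop K W ^^ k) x"

lemma itr_entry: assumes "finite W" "u \<in> W"
  shows "itr K W k x u = (\<Sum>v\<in>W. mpw K W k u v * x v)"
  using assms(2)
proof (induction k arbitrary: u)
  case 0
  have "(\<Sum>v\<in>W. mpw K W 0 u v * x v) = (\<Sum>v\<in>W. if u = v then x v else 0)" by (rule sum.cong) auto
  thus ?case using 0 assms(1) by (simp add: itr_def)
next
  case (Suc k)
  have "itr K W (Suc k) x u = (\<Sum>w\<in>W. K u w * itr K W k x w)"
    by (simp add: itr_def aop_def)
  also have "\<dots> = (\<Sum>w\<in>W. K u w * (\<Sum>v\<in>W. mpw K W k w v * x v))"
    by (rule sum.cong) (auto simp: Suc.IH)
  also have "\<dots> = (\<Sum>w\<in>W. \<Sum>v\<in>W. K u w * mpw K W k w v * x v)"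
    by (simp add: sum_distrib_left mult.assoc)
  also have "\<dots> = (\<Sum>v\<in>W. \<Sum>w\<in>W. K u w * mpw K W k w v * x v)" by (rule sum.swap)
  also have "\<dots> = (\<Sum>v\<in>W. mpw K W (Suc k) u v * x v)" by (simp add: sum_distrib_right)
  finally show ?case .
qed

lemma aop_selfadj: assumes "symk K"
  shows "(\<Sum>u\<in>W. f u * aop K W g u) = (\<Sum>u\<in>W. aop K W f u * g u)"
proof -
  have "(\<Sum>u\<in>W. f u * aop K W g u) = (\<Sum>u\<in>W. \<Sum>v\<in>W. f u * K u v * g v)"
    unfolding aop_def by (simp add: sum_distrib_left mult.assoc)
  also have "\<dots> = (\<Sum>v\<in>W. \<Sum>u\<in>W. f u * K u v * g v)" by (rule sum.swap)
  also have "\<dots> = (\<Sum>v\<in>W. \<Sum>u\<in>W. K v u * f u * g v)"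
  proof (intro sum.cong refl)
    fix v u have "K u v = K v u" using assms unfolding symk_def by blast
    thus "f u * K u v * g v = K v u * f u * g v" by simp
  qed
  also have "\<dots> = (\<Sum>v\<in>W. aop K W f v * g v)"
    unfolding aop_def by (simp add: sum_distrib_right)
  finally show ?thesis .
qed

lemma itr_split: assumes "symk K"
  shows "(\<Sum>u\<in>W. f u * itr K W (a + b) g u) = (\<Sum>u\<in>W. itr K W a f u * itr K W b g u)"
proof (induction a arbitrary: f)
  case 0 thus ?case by (simp add: itr_def)
next
  case (Suc a)
  have "(\<Sum>u\<in>W. f u * itr K W (Suc a + b) g u) = (\<Sum>u\<in>W. f u * aop K W (itr K W (a + b) g) u)"
    by (simp add: itr_def)
  also have "\<dots> = (\<Sum>u\<in>W. aop K W f u * itr K W (a + b) g u)" by (rule aop_selfadj[OF assms])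
  also have "\<dots> = (\<Sum>u\<in>W. itr K W a (aop K W f) u * itr K W b g u)" by (rule Suc.IH)
  also have "itr K W a (aop K W f) = itr K W (Suc a) f" unfolding itr_def by (simp add: funpow_swap1)
  finally show ?case .
qed

lemma itr_norm_bound:
  assumes fin: "finite W" and sym: "symk K"
    and up: "\<forall>g. qf K W g \<le> \<mu> * nrm W g" and lo: "\<forall>g. - (\<mu> * nrm W g) \<le> qf K W g"
  shows "nrm W (itr K W k x) \<le> (\<mu>^2)^k * nrm W x"
proof (induction k)
  case 0 thus ?case by (simp add: itr_def)
next
  case (Suc k)
  have "nrm W (itr K W (Suc k) x) = nrm W (aop K W (itr K W k x))" by (simp add: itr_def)
  also have "\<dots> \<le> \<mu>^2 * nrm W (itr K W k x)" by (rule aop_norm_bound[OF fin sym up lo])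
  also have "\<dots> \<le> \<mu>^2 * ((\<mu>^2)^k * nrm W x)" by (rule mult_left_mono[OF Suc.IH]) simp
  finally show ?case by simp
qed

lemma itr_eigen: assumes ev: "\<forall>u\<in>W. aop K W x u = \<mu> * x u"
  shows "u \<in> W \<Longrightarrow> itr K W k x u = \<mu>^k * x u"
proof (induction k arbitrary: u)
  case 0 thus ?case by (simp add: itr_def)
next
  case (Suc k)
  have "itr K W (Suc k) x u = (\<Sum>v\<in>W. K u v * itr K W k x v)" by (simp add: itr_def aop_def)
  also have "\<dots> = (\<Sum>v\<in>W. \<mu>^k * (K u v * x v))" by (rule sum.cong) (auto simp: Suc.IH)
  also have "\<dots> = \<mu>^k * aop K W x u" by (simp add: aop_def sum_distrib_left)
  finally show ?case using ev Suc.prems by simp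
qed

lemma qf_mpw: assumes "finite W"
  shows "qf (mpw K W k) W x = (\<Sum>u\<in>W. x u * itr K W k x u)"
  unfolding qf_def using itr_entry[OF assms]
  by (simp add: sum_distrib_left mult.assoc)



lemma reidx:
  assumes "finite W"
  shows "(\<Sum>u\<in>W. h u) = (\<Sum>i<length (sorted_list_of_set W). h (sorted_list_of_set W ! i))"
proof -
  let ?vs = "sorted_list_of_set W"
  have inj: "inj_on ((!) ?vs) {..<length ?vs}" by (simp add: inj_on_nth)
  have im: "(!) ?vs ` {..<length ?vs} = W" using assms
    by (metis atLeast_upt list.set_map map_nth set_sorted_list_of_set)
  show ?thesis using sum.reindex[OF inj, of h] im by simp
qed

lemma lambda1_char:
  fixes W :: "'a::linorder set"
  assumes fin: "finite W" and ne: "W \<noteq> {}"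
    and bd: "\<forall>g. qf (Kadj E) W g \<le> \<mu> * nrm W g"
    and f1: "nrm W f = 1" and ev: "\<forall>u\<in>W. aop (Kadj E) W f u = \<mu> * f u"
  shows "lambda1 W E = \<mu>"
proof -
  define vs where "vs = sorted_list_of_set W"
  define n where "n = length vs"
  define A where "A = adj_matrix W E"
  have ri: "(\<Sum>u\<in>W. h u) = (\<Sum>i<n. h (vs ! i))" for h
    unfolding n_def vs_def by (rule reidx[OF fin])
  have setvs: "set vs = W" using fin unfolding vs_def by simp
  have dvs: "distinct vs" unfolding vs_def by simp
  have Acar: "A \<in> carrier_mat n n" unfolding A_def adj_matrix_def n_def vs_def Let_def by simp
  have Aij: "A $$ (i,j) = Kadj E (vs ! i) (vs ! j)" if "i < n" "j < n" for i j
    using that unfolding A_def adj_matrix_def n_def vs_def Let_def Kadj_def by simp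
  have Av: "(A *\<^sub>v v) $ i = (\<Sum>j<n. Kadj E (vs ! i) (vs ! j) * v $ j)"
    if "i < n" "v \<in> carrier_vec n" for i v
    using that Acar by (simp add: scalar_prod_def Aij atLeast0LessThan)
  have mu_ev: "eigenvalue A \<mu>"
  proof -
    define v where "v = vec n (\<lambda>i. f (vs ! i))"
    have vc: "v \<in> carrier_vec n" unfolding v_def by simp
    have "v \<noteq> 0\<^sub>v n"
    proof
      assume "v = 0\<^sub>v n"
      hence "\<forall>i<n. f (vs ! i) = 0" unfolding v_def by (metis index_vec index_zero_vec(1))
      hence "nrm W f = 0" unfolding nrm_def ri by simp
      thus False using f1 by simp
    qed
    moreover have "A *\<^sub>v v = \<mu> \<cdot>\<^sub>v v"
    proof (rule eq_vecI)
      fix i assume "i < dim_vec (\<mu> \<cdot>\<^sub>v v)"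
      hence i: "i < n" unfolding v_def by simp
      have "(A *\<^sub>v v) $ i = (\<Sum>j<n. Kadj E (vs ! i) (vs ! j) * f (vs ! j))"
        unfolding Av[OF i vc] unfolding v_def by simp
      also have "\<dots> = aop (Kadj E) W f (vs ! i)" unfolding aop_def ri ..
      also have "\<dots> = \<mu> * f (vs ! i)" using ev i setvs n_def by auto
      finally show "(A *\<^sub>v v) $ i = (\<mu> \<cdot>\<^sub>v v) $ i" using i unfolding v_def by simp
    qed (use Acar vc in simp)
    ultimately show ?thesis unfolding eigenvalue_def eigenvector_def using vc Acar by auto
  qed
  have le: "k \<le> \<mu>" if evk: "eigenvalue A k" for k
  proof -
    obtain v where vc: "v \<in> carrier_vec n" and vnz: "v \<noteq> 0\<^sub>v n" and Avk: "A *\<^sub>v v = k \<cdot>\<^sub>v v"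
      using evk Acar unfolding eigenvalue_def eigenvector_def by auto
    have inj: "inj_on ((!) vs) {..<n}" using dvs unfolding n_def by (simp add: inj_on_nth)
    define g where "g = (\<lambda>u. v $ (inv_into {..<n} ((!) vs) u))"
    have gi: "g (vs ! i) = v $ i" if "i < n" for i
      unfolding g_def using inv_into_f_f[OF inj] that by simp
    have "qf (Kadj E) W g = (\<Sum>i<n. \<Sum>j<n. v $ i * Kadj E (vs ! i) (vs ! j) * v $ j)"
      unfolding qf_def ri by (intro sum.cong refl) (simp add: gi)
    also have "\<dots> = (\<Sum>i<n. v $ i * (A *\<^sub>v v) $ i)"
      by (intro sum.cong refl) (simp add: Av vc sum_distrib_left mult.assoc)
    also have "\<dots> = (\<Sum>i<n. k * (v $ i)^2)"
      using vc unfolding Avk by (intro sum.cong refl) (simp add: power2_eq_square)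
    also have "\<dots> = k * nrm W g"
      unfolding nrm_def ri by (simp add: gi sum_distrib_left)
    finally have q: "qf (Kadj E) W g = k * nrm W g" .
    have "nrm W g \<noteq> 0"
    proof
      assume "nrm W g = 0"
      hence "\<forall>i<n. (v $ i)^2 = 0" unfolding nrm_def ri
        by (simp add: gi sum_nonneg_eq_0_iff)
      hence "v = 0\<^sub>v n" using vc by (intro eq_vecI) auto
      thus False using vnz by simp
    qed
    hence pos: "nrm W g > 0" using nrm_nonneg[of W g] by simp
    have "k * nrm W g \<le> \<mu> * nrm W g" using bd q by metis
    thus ?thesis using pos by simp
  qed
  have fin_ev: "finite {k. eigenvalue A k}"
  proof -
    have "char_poly A \<noteq> 0" using degree_monic_char_poly[OF Acar] by auto
    hence "finite {k. poly (char_poly A) k = 0}" by (rule poly_roots_finite)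
    thus ?thesis using eigenvalue_root_char_poly[OF Acar] by simp
  qed
  show ?thesis unfolding lambda1_def A_def[symmetric]
    by (rule Max_eqI[OF fin_ev]) (use le mu_ev in auto)
qed



lemma one_le_mult': "1 \<le> (a::real) \<Longrightarrow> 1 \<le> b \<Longrightarrow> 1 \<le> a * b"
  using mult_mono[of 1 a 1 b] by simp

lemma sg_facts:
  assumes "simple_graph V E"
  shows "finite V" "symk (Kadj E)" "\<forall>u v. Kadj E u v \<ge> 0" "\<And>u v. E u v \<Longrightarrow> E v u"
    "\<And>u v. E u v \<Longrightarrow> u \<in> V \<and> v \<in> V"
proof -
  show "finite V" using assms by (simp add: simple_graph_def)
  show s: "\<And>u v. E u v \<Longrightarrow> E v u" using assms unfolding simple_graph_def by blast
  show "\<And>u v. E u v \<Longrightarrow> u \<in> V \<and> v \<in> V" using assms unfolding simple_graph_def by blast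
  have "E u v = E v u" for u v using s by blast
  thus "symk (Kadj E)" by (simp add: symk_def Kadj_def)
  show "\<forall>u v. Kadj E u v \<ge> 0" by (simp add: Kadj_def)
qed

lemma entry_bound:
  assumes sg: "simple_graph V E" and net: "r_net V E r S" and u: "u \<in> V - S"
  shows "mpw (Kadj E) (V - S) (2*r) u u + 1 \<le> mpw (Kadj E) V (2*r) u u"
proof -
  let ?K = "Kadj E" let ?W = "V - S"
  note sf = sg_facts[OF sg]
  have fin: "finite V" by (rule sf(1))
  have SV: "S \<subseteq> V" using net unfolding r_net_def by blast
  obtain s where s: "s \<in> S" and dl: "dist_le V E u s r"
    using net u unfolding r_net_def by blast
  obtain p where p: "p \<noteq> []" "hd p = u" "last p = s" "length p \<le> r + 1" "set p \<subseteq> V"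
    and ch: "\<forall>i. Suc i < length p \<longrightarrow> E (p ! i) (p ! Suc i)"
    using dl unfolding dist_le_def by blast
  define d where "d = length p - 1"
  have "length p \<noteq> 1"
  proof
    assume "length p = 1"
    then obtain a where "p = [a]" by (cases p) auto
    thus False using p u s by auto
  qed
  moreover have "length p > 0" using p(1) by simp
  ultimately have lp: "length p \<ge> 2" by linarith
  hence d1: "d \<ge> 1" and dr: "d \<le> r" using p(4) unfolding d_def by auto
  have sVW: "s \<in> V - ?W" using s SV by auto
  have uV: "u \<in> V" using u by auto
  have sV: "s \<in> V" using s SV by auto
  have h1: "mpw ?K V d u s \<ge> 1" using path_mpw[OF fin p(1) p(5) ch] p unfolding d_def by simp
  have "E (p ! 0) (p ! 1)" using ch lp by auto
  hence Eub: "E u (p ! 1)" using p(1,2) by (simp add: hd_conv_nth)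
  have bV: "p ! 1 \<in> V" using sf(5)[OF Eub] by blast
  have h2: "mpw ?K V 2 u u \<ge> 1"
  proof -
    have "\<forall>i. Suc i < length [u, p!1, u] \<longrightarrow> E ([u, p!1, u] ! i) ([u, p!1, u] ! Suc i)"
    proof (intro allI impI)
      fix i assume "Suc i < length [u, p!1, u]"
      hence "i = 0 \<or> i = 1" by auto
      thus "E ([u, p!1, u] ! i) ([u, p!1, u] ! Suc i)" using Eub sf(4)[OF Eub] by auto
    qed
    from path_mpw[OF fin _ _ this] show ?thesis using uV bV by (simp add: numeral_2_eq_2)
  qed
  have h3: "mpw ?K V (2*j) u u \<ge> 1" for j
  proof (induction j)
    case 0 thus ?case by simp
  next
    case (Suc j)
    have "mpw ?K V 2 u u * mpw ?K V (2*j) u u \<le> mpw ?K V (2 + 2*j) u u"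
      by (rule mpw_ge_term[OF fin uV uV sf(3)])
    moreover have "1 \<le> mpw ?K V 2 u u * mpw ?K V (2*j) u u" by (rule one_le_mult'[OF h2 Suc.IH])
    ultimately show ?case by simp
  qed
  have h4: "mpw ?K V d s u \<ge> 1" using h1 mpw_sym[OF fin sf(2) uV sV] by simp
  have h5: "mpw ?K V (2*r - d) s u \<ge> 1"
  proof -
    have "mpw ?K V d s u * mpw ?K V (2*(r-d)) u u \<le> mpw ?K V (d + 2*(r-d)) s u"
      by (rule mpw_ge_term[OF fin sV uV sf(3)])
    moreover have "d + 2*(r-d) = 2*r - d" using dr by simp
    moreover have "1 \<le> mpw ?K V d s u * mpw ?K V (2*(r-d)) u u" by (rule one_le_mult'[OF h4 h3])
    ultimately show ?thesis by simp
  qed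
  have nn: "\<And>a b c. 0 \<le> mpw ?K V a b c" by (rule mpw_nonneg[OF sf(3)])
  have nnW: "\<And>a b c. 0 \<le> mpw ?K ?W a b c" by (rule mpw_nonneg[OF sf(3)])
  have WV: "?W \<subseteq> V" by auto
  have finW: "finite ?W" using fin by simp
  have "mpw ?K V (2*r) u u = mpw ?K V (d + (2*r - d)) u u" using dr by simp
  also have "\<dots> = (\<Sum>w\<in>V. mpw ?K V d u w * mpw ?K V (2*r - d) w u)"
    by (rule mpw_add[OF fin uV])
  also have "\<dots> = (\<Sum>w\<in>V - ?W. mpw ?K V d u w * mpw ?K V (2*r - d) w u)
      + (\<Sum>w\<in>?W. mpw ?K V d u w * mpw ?K V (2*r - d) w u)"
    by (rule sum.subset_diff[OF WV fin])
  finally have split: "mpw ?K V (2*r) u u = (\<Sum>w\<in>V - ?W. mpw ?K V d u w * mpw ?K V (2*r - d) w u)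
      + (\<Sum>w\<in>?W. mpw ?K V d u w * mpw ?K V (2*r - d) w u)" .
  have A1: "1 \<le> (\<Sum>w\<in>V - ?W. mpw ?K V d u w * mpw ?K V (2*r - d) w u)"
  proof -
    have "mpw ?K V d u s * mpw ?K V (2*r - d) s u \<le> (\<Sum>w\<in>V - ?W. mpw ?K V d u w * mpw ?K V (2*r - d) w u)"
      by (rule member_le_sum[OF sVW]) (use fin nn in auto)
    moreover have "1 \<le> mpw ?K V d u s * mpw ?K V (2*r - d) s u" by (rule one_le_mult'[OF h1 h5])
    ultimately show ?thesis by simp
  qed
  have A2: "mpw ?K ?W (2*r) u u \<le> (\<Sum>w\<in>?W. mpw ?K V d u w * mpw ?K V (2*r - d) w u)"
  proof -
    have "mpw ?K ?W (2*r) u u = mpw ?K ?W (d + (2*r - d)) u u" using dr by simp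
    also have "\<dots> = (\<Sum>w\<in>?W. mpw ?K ?W d u w * mpw ?K ?W (2*r - d) w u)"
      by (rule mpw_add[OF finW u])
    also have "\<dots> \<le> (\<Sum>w\<in>?W. mpw ?K V d u w * mpw ?K V (2*r - d) w u)"
      by (intro sum_mono mult_mono mpw_mono[OF fin WV sf(3)] nn nnW)
    finally show ?thesis .
  qed
  show ?thesis using split A1 A2 by linarith
qed

lemma sum_restrict_W:
  assumes "finite V" "W \<subseteq> V" "\<forall>v\<in>V - W. h v = 0"
  shows "(\<Sum>v\<in>V. h v) = (\<Sum>v\<in>W. h v)"
  by (rule sum.mono_neutral_right[OF assms])


lemma spectral_data:
  fixes W :: "'a::linorder set"
  assumes sg: "simple_graph V E" and WV: "W \<subseteq> V" and ne: "W \<noteq> {}"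
  shows "\<exists>x. nrm W x = 1 \<and> (\<forall>v. x v \<ge> 0) \<and> (\<forall>u\<in>W. aop (Kadj E) W x u = lambda1 W E * x u)
     \<and> (\<forall>g. qf (Kadj E) W g \<le> lambda1 W E * nrm W g) \<and> (\<forall>g. - (lambda1 W E * nrm W g) \<le> qf (Kadj E) W g)"
proof -
  let ?K = "Kadj E"
  note sf = sg_facts[OF sg]
  have fin: "finite W" using sf(1) WV finite_subset by blast
  obtain f where f1: "nrm W f = 1" and mx: "\<forall>g. nrm W g = 1 \<longrightarrow> qf ?K W g \<le> qf ?K W f"
    using rayleigh_exists[OF fin ne] by blast
  define \<mu> where "\<mu> = qf ?K W f"
  have bd: "\<forall>g. qf ?K W g \<le> \<mu> * nrm W g" unfolding \<mu>_def using rayleigh_bound[OF fin f1 mx] by blast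
  define x where "x = (\<lambda>v. \<bar>f v\<bar>)"
  have x1: "nrm W x = 1" unfolding x_def nrm_abs by (rule f1)
  have "qf ?K W f \<le> qf ?K W x" unfolding x_def by (rule qf_abs(1)[OF sf(3)])
  moreover have "qf ?K W x \<le> \<mu> * nrm W x" using bd by blast
  ultimately have qx: "qf ?K W x = \<mu> * nrm W x" using x1 unfolding \<mu>_def by simp
  have ev: "\<forall>u\<in>W. aop ?K W x u = \<mu> * x u"
    using eigen_of_max[OF fin sf(2) _ qx bd] by blast
  have lam: "lambda1 W E = \<mu>" by (rule lambda1_char[OF fin ne bd x1 ev])
  have lo: "\<forall>g. - (\<mu> * nrm W g) \<le> qf ?K W g"
  proof
    fix g
    have "qf ?K W (\<lambda>v. \<bar>g v\<bar>) \<le> \<mu> * nrm W (\<lambda>v. \<bar>g v\<bar>)" using bd by blast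
    thus "- (\<mu> * nrm W g) \<le> qf ?K W g" using qf_abs(2)[OF sf(3), of W g] unfolding nrm_abs by linarith
  qed
  show ?thesis using x1 ev bd lo lam unfolding x_def by auto
qed

theorem lemma6:
  fixes V :: "'a::linorder set" and E :: "'a \<Rightarrow> 'a \<Rightarrow> bool" and r :: nat and S :: "'a set"
  assumes "r \<ge> 1"
    and "simple_graph V E"
    and "r_net V E r S"
    and "V - S \<noteq> {}"
  shows "lambda1 (V - S) E ^ (2 * r) \<le> lambda1 V E ^ (2 * r) - 1"
proof -
  let ?K = "Kadj E" let ?W = "V - S"
  note sg = assms(2)
  note sf = sg_facts[OF sg]
  have fin: "finite V" by (rule sf(1))
  have WV: "?W \<subseteq> V" by auto
  have finW: "finite ?W" using fin by simp
  obtain x where x1: "nrm ?W x = 1" and xnn: "\<forall>v. x v \<ge> 0"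
    and evx: "\<forall>u\<in>?W. aop ?K ?W x u = lambda1 ?W E * x u"
    using spectral_data[OF sg WV assms(4)] by blast
  define \<mu> where "\<mu> = lambda1 ?W E"
  have Vne: "V \<noteq> {}" using assms(4) by auto
  obtain y where up: "\<forall>g. qf ?K V g \<le> lambda1 V E * nrm V g"
    and lo: "\<forall>g. - (lambda1 V E * nrm V g) \<le> qf ?K V g"
    using spectral_data[OF sg subset_refl Vne] by blast
  define lam where "lam = lambda1 V E"
  define z where "z = (\<lambda>v. if v \<in> ?W then x v else 0)"
  have nz: "nrm V z = 1"
  proof -
    have "nrm V z = (\<Sum>v\<in>?W. (z v)^2)" unfolding nrm_def
      by (rule sum_restrict_W[OF fin WV]) (auto simp: z_def)
    also have "\<dots> = nrm ?W x" unfolding nrm_def z_def by simp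
    finally show ?thesis using x1 by simp
  qed
  have U: "qf (mpw ?K V (2*r)) V z \<le> lam^(2*r)"
  proof -
    have "qf (mpw ?K V (2*r)) V z = (\<Sum>u\<in>V. z u * itr ?K V (r + r) z u)"
      using qf_mpw[OF fin] by (simp add: mult_2)
    also have "\<dots> = (\<Sum>u\<in>V. itr ?K V r z u * itr ?K V r z u)" by (rule itr_split[OF sf(2)])
    also have "\<dots> = nrm V (itr ?K V r z)" unfolding nrm_def by (simp add: power2_eq_square)
    also have "\<dots> \<le> (lam^2)^r * nrm V z"
      unfolding lam_def by (rule itr_norm_bound[OF fin sf(2) up lo])
    also have "\<dots> = lam^(2*r)" using nz by (simp add: power_mult)
    finally show ?thesis .
  qed
  have L: "\<mu>^(2*r) + 1 \<le> qf (mpw ?K V (2*r)) V z"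
  proof -
    have "qf (mpw ?K V (2*r)) V z = (\<Sum>u\<in>?W. \<Sum>v\<in>V. z u * mpw ?K V (2*r) u v * z v)"
      unfolding qf_def by (rule sum_restrict_W[OF fin WV]) (auto simp: z_def)
    also have "\<dots> = (\<Sum>u\<in>?W. \<Sum>v\<in>?W. x u * mpw ?K V (2*r) u v * x v)"
    proof (rule sum.cong[OF refl])
      fix u assume u: "u \<in> ?W"
      have "(\<Sum>v\<in>V. z u * mpw ?K V (2*r) u v * z v) = (\<Sum>v\<in>?W. z u * mpw ?K V (2*r) u v * z v)"
        by (rule sum_restrict_W[OF fin WV]) (auto simp: z_def)
      also have "\<dots> = (\<Sum>v\<in>?W. x u * mpw ?K V (2*r) u v * x v)" using u by (simp add: z_def)
      finally show "(\<Sum>v\<in>V. z u * mpw ?K V (2*r) u v * z v) = (\<Sum>v\<in>?W. x u * mpw ?K V (2*r) u v * x v)" .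
    qed
    finally have e1: "qf (mpw ?K V (2*r)) V z = (\<Sum>u\<in>?W. \<Sum>v\<in>?W. x u * mpw ?K V (2*r) u v * x v)" .
    have e2: "(\<Sum>u\<in>?W. \<Sum>v\<in>?W. x u * (mpw ?K ?W (2*r) u v + (if u = v then 1 else 0)) * x v)
        \<le> (\<Sum>u\<in>?W. \<Sum>v\<in>?W. x u * mpw ?K V (2*r) u v * x v)"
    proof (intro sum_mono)
      fix u v assume u: "u \<in> ?W" and v: "v \<in> ?W"
      have "mpw ?K ?W (2*r) u v + (if u = v then 1 else 0) \<le> mpw ?K V (2*r) u v"
      proof (cases "u = v")
        case True thus ?thesis using entry_bound[OF sg assms(3) u] by simp
      next
        case False thus ?thesis using mpw_mono[OF fin WV sf(3)] by simp
      qed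
      thus "x u * (mpw ?K ?W (2*r) u v + (if u = v then 1 else 0)) * x v \<le> x u * mpw ?K V (2*r) u v * x v"
        using xnn by (intro mult_right_mono mult_left_mono) auto
    qed
    have e3: "(\<Sum>u\<in>?W. \<Sum>v\<in>?W. x u * (mpw ?K ?W (2*r) u v + (if u = v then 1 else 0)) * x v)
        = qf (mpw ?K ?W (2*r)) ?W x + nrm ?W x"
    proof -
      have "(\<Sum>u\<in>?W. \<Sum>v\<in>?W. x u * (mpw ?K ?W (2*r) u v + (if u = v then 1 else 0)) * x v)
          = (\<Sum>u\<in>?W. (\<Sum>v\<in>?W. x u * mpw ?K ?W (2*r) u v * x v) + (x u)^2)"
      proof (rule sum.cong[OF refl])
        fix u assume u: "u \<in> ?W"
        have "(\<Sum>v\<in>?W. x u * (mpw ?K ?W (2*r) u v + (if u = v then 1 else 0)) * x v)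
            = (\<Sum>v\<in>?W. x u * mpw ?K ?W (2*r) u v * x v + (if u = v then (x u)^2 else 0))"
          by (rule sum.cong[OF refl]) (auto simp: algebra_simps power2_eq_square)
        also have "\<dots> = (\<Sum>v\<in>?W. x u * mpw ?K ?W (2*r) u v * x v) + (x u)^2"
          using u finW by (simp add: sum.distrib)
        finally show "(\<Sum>v\<in>?W. x u * (mpw ?K ?W (2*r) u v + (if u = v then 1 else 0)) * x v)
            = (\<Sum>v\<in>?W. x u * mpw ?K ?W (2*r) u v * x v) + (x u)^2" .
      qed
      thus ?thesis unfolding qf_def nrm_def by (simp add: sum.distrib)
    qed
    have e4: "qf (mpw ?K ?W (2*r)) ?W x = \<mu>^(2*r)"
    proof -
      have "qf (mpw ?K ?W (2*r)) ?W x = (\<Sum>u\<in>?W. x u * itr ?K ?W (2*r) x u)" by (rule qf_mpw[OF finW])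
      also have "\<dots> = (\<Sum>u\<in>?W. \<mu>^(2*r) * (x u)^2)"
        using itr_eigen[OF evx] unfolding \<mu>_def by (intro sum.cong refl) (simp add: power2_eq_square)
      also have "\<dots> = \<mu>^(2*r) * nrm ?W x" unfolding nrm_def by (rule sum_distrib_left[symmetric])
      also have "\<dots> = \<mu>^(2*r)" using x1 by simp
      finally show ?thesis .
    qed
    show ?thesis using e1 e2 e3 e4 x1 by linarith
  qed
  show ?thesis using U L unfolding \<mu>_def lam_def by linarith
qed


end
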